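(* In the whitened Gaussian spiked model (context), condition on the event $\mathcal{E}$. Let $S_{\mathbf{v}}^{(t)}\subset[n]$ with $|S_{\mathbf{v}}^{(t)}|\le k_{\mathbf{v}}$, let $\hat{\mathbf{v}}^{(t)}$ be a unit vector supported on $S_{\mathbf{v}}^{(t)}$, let $\mathbf{r}_{\mathbf{u}}=\widehat{\boldsymbol{\Sigma}}_{xy}\hat{\mathbf{v}}^{(t)}$, and let $S_{\mathbf{u}}^{(t+1)}$ be the index set of the $p$ largest entries of $|\mathbf{r}_{\mathbf{u}}|$, where $p\le k_{\mathbf{u}}$. Then, for a constant $C>0$ determined by the constants of the event $\mathcal{E}$, $$\|\mathbf{u}_{S_{\mathbf{u}}^{(t+1)}}\|_2\ge\sqrt{\frac{1}{s_{\mathbf{u}}(|S_{\mathbf{u}}^{(t+1)}|)}}-\frac{2C(1+\rho)}{\rho|\langle\mathbf{v},\hat{\mathbf{v}}^{(t)}\rangle|}\sqrt{\frac{(|S_{\mathbf{u}}^{(t+1)}|+|S_{\mathbf{v}}^{(t)}|)\log n}{m}}.$$ Symmetrically, if $\hat{\mathbf{u}}^{(t)}$ is a unit vector supported on $S_{\mathbf{u}}^{(t)}$ with $|S_{\mathbf{u}}^{(t)}|\le k_{\mathbf{u}}$, $\mathbf{r}_{\mathbf{v}}=\widehat{\boldsymbol{\Sigma}}_{xy}^\top\hat{\mathbf{u}}^{(t)}$, and $S_{\mathbf{v}}^{(t+1)}$ is the index set of the $q\le k_{\mathbf{v}}$ largest entries of $|\mathbf{r}_{\mathbf{v}}|$,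 then $$\|\mathbf{v}_{S_{\mathbf{v}}^{(t+1)}}\|_2\ge\sqrt{\frac{1}{s_{\mathbf{v}}(|S_{\mathbf{v}}^{(t+1)}|)}}-\frac{2C(1+\rho)}{\rho|\langle\mathbf{u},\hat{\mathbf{u}}^{(t)}\rangle|}\sqrt{\frac{(|S_{\mathbf{u}}^{(t)}|+|S_{\mathbf{v}}^{(t+1)}|)\log n}{m}}.$$
   Context: Model: $m$ i.i.d. samples $(\mathbf{x}_i,\mathbf{y}_i)$ from a zero-mean jointly Gaussian law on $\mathbb{R}^n\times\mathbb{R}^n$ with $\boldsymbol{\Sigma}_{xx}=\boldsymbol{\Sigma}_{yy}=\mathbf{I}_n$, $\boldsymbol{\Sigma}_{xy}=\rho\mathbf{u}\mathbf{v}^\top$, $\rho\in(0,1)$, $\|\mathbf{u}\|_2=\|\mathbf{v}\|_2=1$, $\|\mathbf{u}\|_0\le k_{\mathbf{u}}$, $\|\mathbf{v}\|_0\le k_{\mathbf{v}}$. $\widehat{\boldsymbol{\Sigma}}_{xy}=\frac1m\sum_i\mathbf{x}_i\mathbf{y}_i^\top$, $\mathbf{W}=\widehat{\boldsymbol{\Sigma}}_{xy}-\rho\mathbf{u}\mathbf{v}^\top$. Event $\mathcal{E}$: for all $S_1,S_2\subset[n]$ with $|S_1|\le k_{\mathbf{u}}$, $|S_2|\le k_{\mathbf{v}}$, $\|\mathbf{W}_{S_1,S_2}\|_2\le C'\sqrt{((|S_1|+|S_2|)\log n+c'\log n)/m}$ for fixed constants $C',c'>0$ (submatrix, spectral norm).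 $\mathbf{x}_S$ is the subvector on $S$. Structure functions: $s_{\mathbf{u}}(p)=(\sum_{i=1}^pu_{(i)}^2)^{-1}$, $s_{\mathbf{v}}(q)=(\sum_{j=1}^qv_{(j)}^2)^{-1}$, where $u_{(i)}$ is the $i$-th largest entry of $\mathbf{u}$ in absolute value. *)

theory Defs
  imports Complex_Main
begin

text \<open>Vectors in R^n are functions nat => real, indexed by {..<n}; matrices are
  nat => nat => real indexed by {..<n} x {..<n}.\<close>

definition supported_in :: "nat set \<Rightarrow> (nat \<Rightarrow> real) \<Rightarrow> bool" where
  "supported_in S x \<longleftrightarrow> (\<forall>i. i \<notin> S \<longrightarrow> x i = 0)"

definition sub_norm :: "nat set \<Rightarrow> (nat \<Rightarrow> real) \<Rightarrow> real" where
  "sub_norm S x = sqrt (\<Sum>i\<in>S. (x i)\<^sup>2)"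

definition l0 :: "nat \<Rightarrow> (nat \<Rightarrow> real) \<Rightarrow> nat" where
  "l0 n x = card {i\<in>{..<n}. x i \<noteq> 0}"

definition inner_n :: "nat \<Rightarrow> (nat \<Rightarrow> real) \<Rightarrow> (nat \<Rightarrow> real) \<Rightarrow> real" where
  "inner_n n x y = (\<Sum>i<n. x i * y i)"

text \<open>Sample cross-covariance (1/m) sum_l x_l y_l^T, X l and Y l being the l-th samples.\<close>
definition sample_cross_cov ::
  "nat \<Rightarrow> (nat \<Rightarrow> nat \<Rightarrow> real) \<Rightarrow> (nat \<Rightarrow> nat \<Rightarrow> real) \<Rightarrow> nat \<Rightarrow> nat \<Rightarrow> real" where
  "sample_cross_cov m X Y i j = (1 / real m) * (\<Sum>l<m. X l i * Y l j)"

definition sub_spec_norm :: "(nat \<Rightarrow> nat \<Rightarrow> real) \<Rightarrow> nat set \<Rightarrow> nat set \<Rightarrow> real" where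
  "sub_spec_norm A S1 S2 =
     (SUP z \<in> {z. (\<Sum>j\<in>S2. (z j)\<^sup>2) \<le> 1}. sqrt (\<Sum>i\<in>S1. (\<Sum>j\<in>S2. A i j * z j)\<^sup>2))"

definition top_sq_sum :: "nat \<Rightarrow> (nat \<Rightarrow> real) \<Rightarrow> nat \<Rightarrow> real" where
  "top_sq_sum n x p = (\<Sum>a \<leftarrow> take p (rev (sort (map (\<lambda>i. \<bar>x i\<bar>) [0..<n]))). a\<^sup>2)"

definition struct_fun :: "nat \<Rightarrow> (nat \<Rightarrow> real) \<Rightarrow> nat \<Rightarrow> real" where
  "struct_fun n x p = 1 / top_sq_sum n x p"

text \<open>S is an index set of the p largest entries of |r| (ties broken arbitrarily).\<close>
definition is_top_set :: "nat \<Rightarrow> (nat \<Rightarrow> real) \<Rightarrow> nat \<Rightarrow> nat set \<Rightarrow> bool" where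
  "is_top_set n r p S \<longleftrightarrow> S \<subseteq> {..<n} \<and> card S = p \<and>
     (\<forall>i\<in>S. \<forall>j\<in>{..<n} - S. \<bar>r j\<bar> \<le> \<bar>r i\<bar>)"

definition spiked_params ::
  "nat \<Rightarrow> real \<Rightarrow> (nat \<Rightarrow> real) \<Rightarrow> (nat \<Rightarrow> real) \<Rightarrow> nat \<Rightarrow> nat \<Rightarrow> bool" where
  "spiked_params n \<rho> u v ku kv \<longleftrightarrow>
     0 < \<rho> \<and> \<rho> < 1 \<and> supported_in {..<n} u \<and> supported_in {..<n} v \<and>
     sub_norm {..<n} u = 1 \<and> sub_norm {..<n} v = 1 \<and> l0 n u \<le> ku \<and> l0 n v \<le> kv"

definition event_E ::
  "real \<Rightarrow> real \<Rightarrow> nat \<Rightarrow> nat \<Rightarrow> (nat \<Rightarrow> nat \<Rightarrow> real) \<Rightarrow> real \<Rightarrow> (nat \<Rightarrow> real) \<Rightarrow> (nat \<Rightarrow> real)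
    \<Rightarrow> nat \<Rightarrow> nat \<Rightarrow> bool" where
  "event_E C' c' n m Sxy \<rho> u v ku kv \<longleftrightarrow>
     (\<forall>S1 S2. S1 \<subseteq> {..<n} \<and> S2 \<subseteq> {..<n} \<and> card S1 \<le> ku \<and> card S2 \<le> kv \<longrightarrow>
        sub_spec_norm (\<lambda>i j. Sxy i j - \<rho> * u i * v j) S1 S2
          \<le> C' * sqrt (((real (card S1) + real (card S2)) * ln (real n) + c' * ln (real n)) / real m))"

end

theory Submission imports Defs "HOL-Analysis.L2_Norm" begin

lemma map_insort_key: "map f (insort_key f x xs) = insort (f x) (map f xs)"
  by (induct xs) auto

lemma map_sort_key: "map f (sort_key f xs) = sort (map f xs)"
  by (induct xs) (auto simp: map_insort_key)

lemma top_exists: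
  assumes "p \<le> n"
  shows "\<exists>T. T \<subseteq> {..<n} \<and> card T = p \<and> top_sq_sum n u p = (\<Sum>i\<in>T. (u i)\<^sup>2)"
proof -
  define L where "L = rev (sort_key (\<lambda>i. \<bar>u i\<bar>) [0..<n])"
  have m: "rev (sort (map (\<lambda>i. \<bar>u i\<bar>) [0..<n])) = map (\<lambda>i. \<bar>u i\<bar>) L"
    unfolding L_def by (metis map_sort_key rev_map)
  have d: "distinct (take p L)" unfolding L_def by simp
  have len: "length L = n" unfolding L_def by simp
  have "top_sq_sum n u p = (\<Sum>a \<leftarrow> map (\<lambda>i. \<bar>u i\<bar>) (take p L). a\<^sup>2)"
    unfolding top_sq_sum_def m by (simp add: take_map)
  also have "\<dots> = sum_list (map (\<lambda>i. (u i)\<^sup>2) (take p L))"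
    by (simp add: comp_def)
  also have "\<dots> = (\<Sum>i\<in>set (take p L). (u i)\<^sup>2)"
    using d by (rule sum_list_distinct_conv_sum_set)
  finally have e: "top_sq_sum n u p = (\<Sum>i\<in>set (take p L). (u i)\<^sup>2)" .
  have c: "card (set (take p L)) = p"
    using distinct_card[OF d] len assms by simp
  have s: "set (take p L) \<subseteq> {..<n}"
    using set_take_subset[of p L] unfolding L_def by auto
  show ?thesis using e c s by blast
qed

lemma swap_le:
  assumes top: "is_top_set n r p S" and T: "T \<subseteq> {..<n}" "card T = p"
  shows "(\<Sum>i\<in>T. (r i)\<^sup>2) \<le> (\<Sum>i\<in>S. (r i)\<^sup>2)"
proof -
  have S: "S \<subseteq> {..<n}" "card S = p" and dom: "\<forall>i\<in>S. \<forall>j\<in>{..<n} - S. \<bar>r j\<bar> \<le> \<bar>r i\<bar>"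
    using top unfolding is_top_set_def by auto
  have fS: "finite S" and fT: "finite T" using S T finite_subset by blast+
  have "card (T - S) = card T - card (T \<inter> S)" using fT by (simp add: card_Diff_subset_Int)
  moreover have "card (S - T) = card S - card (S \<inter> T)" using fS by (simp add: card_Diff_subset_Int)
  ultimately have "card (T - S) = card (S - T)" using S T by (simp add: Int_commute)
  then obtain f where f: "bij_betw f (T - S) (S - T)"
    using finite_same_card_bij fS fT by blast
  have "(\<Sum>i\<in>T - S. (r i)\<^sup>2) \<le> (\<Sum>i\<in>T - S. (r (f i))\<^sup>2)"
  proof (rule sum_mono)
    fix i assume i: "i \<in> T - S"
    then have "f i \<in> S" using f bij_betwE by blast
    moreover have "i \<in> {..<n} - S" using i T by auto
    ultimately show "(r i)\<^sup>2 \<le> (r (f i))\<^sup>2" using dom abs_le_square_iff by blast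
  qed
  also have "\<dots> = (\<Sum>i\<in>S - T. (r i)\<^sup>2)"
    using sum.reindex_bij_betw[OF f, of "\<lambda>i. (r i)\<^sup>2"] by simp
  finally have "(\<Sum>i\<in>T - S. (r i)\<^sup>2) \<le> (\<Sum>i\<in>S - T. (r i)\<^sup>2)" .
  moreover have "(\<Sum>i\<in>T. (r i)\<^sup>2) = (\<Sum>i\<in>T \<inter> S. (r i)\<^sup>2) + (\<Sum>i\<in>T - S. (r i)\<^sup>2)"
    using fT by (simp add: sum.Int_Diff)
  moreover have "(\<Sum>i\<in>S. (r i)\<^sup>2) = (\<Sum>i\<in>S \<inter> T. (r i)\<^sup>2) + (\<Sum>i\<in>S - T. (r i)\<^sup>2)"
    using fS by (simp add: sum.Int_Diff)
  ultimately show ?thesis by (simp add: Int_commute)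
qed

lemma core:
  assumes top: "is_top_set n r p S" and T: "T \<subseteq> {..<n}" "card T = p"
    and r: "\<And>i. r i = \<alpha> * x i + w i" and a: "\<alpha> \<noteq> 0"
    and bS: "L2_set w S \<le> B" and bT: "L2_set w T \<le> B"
  shows "L2_set x S \<ge> L2_set x T - 2 * B / \<bar>\<alpha>\<bar>"
proof -
  have h1: "L2_set r T \<le> L2_set r S"
    unfolding L2_set_def using swap_le[OF top T] by simp
  have h2: "L2_set r S \<le> \<bar>\<alpha>\<bar> * L2_set x S + L2_set w S"
  proof -
    have "r = (\<lambda>i. \<alpha> * x i + w i)" using r by auto
    then have "L2_set r S = L2_set (\<lambda>i. \<alpha> * x i + w i) S" by simp
    also have "\<dots> \<le> L2_set (\<lambda>i. \<alpha> * x i) S + L2_set w S" by (rule L2_set_triangle_ineq)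
    also have "L2_set (\<lambda>i. \<alpha> * x i) S = \<bar>\<alpha>\<bar> * L2_set x S"
      unfolding L2_set_def by (simp add: power_mult_distrib real_sqrt_mult flip: sum_distrib_left)
    finally show ?thesis .
  qed
  have h3: "\<bar>\<alpha>\<bar> * L2_set x T \<le> L2_set r T + L2_set w T"
  proof -
    have "L2_set (\<lambda>i. \<alpha> * x i) T = \<bar>\<alpha>\<bar> * L2_set x T"
      unfolding L2_set_def by (simp add: power_mult_distrib real_sqrt_mult flip: sum_distrib_left)
    moreover have "(\<lambda>i. \<alpha> * x i) = (\<lambda>i. r i + - w i)" using r by auto
    moreover have "L2_set (\<lambda>i. r i + - w i) T \<le> L2_set r T + L2_set (\<lambda>i. - w i) T"
      by (rule L2_set_triangle_ineq)
    moreover have "L2_set (\<lambda>i. - w i) T = L2_set w T" unfolding L2_set_def by simp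
    ultimately show ?thesis by simp
  qed
  have "\<bar>\<alpha>\<bar> * L2_set x T \<le> \<bar>\<alpha>\<bar> * L2_set x S + 2 * B" using h1 h2 h3 bS bT by linarith
  then have "L2_set x T \<le> L2_set x S + 2 * B / \<bar>\<alpha>\<bar>" using a
    by (simp add: field_simps)
  then show ?thesis by simp
qed


lemma abs_sum_le_L2:
  "\<bar>\<Sum>j\<in>S. a j * z j\<bar> \<le> L2_set a S * L2_set z S"
proof -
  have "\<bar>\<Sum>j\<in>S. a j * z j\<bar> \<le> (\<Sum>j\<in>S. \<bar>a j\<bar> * \<bar>z j\<bar>)"
    by (metis (no_types, lifting) abs_mult sum.cong sum_abs)
  also have "\<dots> \<le> L2_set a S * L2_set z S" by (rule L2_set_mult_ineq)
  finally show ?thesis .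
qed

lemma spec_bdd:
  fixes A :: "nat \<Rightarrow> nat \<Rightarrow> real" and S1 S2 :: "nat set"
  shows "bdd_above ((\<lambda>z. sqrt (\<Sum>i\<in>S1. (\<Sum>j\<in>S2. A i j * z j)\<^sup>2)) ` {z. (\<Sum>j\<in>S2. (z j)\<^sup>2) \<le> 1})"
proof (rule bdd_aboveI2)
  fix z :: "nat \<Rightarrow> real" assume "z \<in> {z. (\<Sum>j\<in>S2. (z j)\<^sup>2) \<le> 1}"
  then have z: "L2_set z S2 \<le> 1" unfolding L2_set_def by simp
  have "(\<Sum>i\<in>S1. (\<Sum>j\<in>S2. A i j * z j)\<^sup>2) \<le> (\<Sum>i\<in>S1. (L2_set (A i) S2)\<^sup>2)"
  proof (rule sum_mono)
    fix i
    have "\<bar>\<Sum>j\<in>S2. A i j * z j\<bar> \<le> L2_set (A i) S2 * L2_set z S2" by (rule abs_sum_le_L2)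
    also have "\<dots> \<le> L2_set (A i) S2" using z by (simp add: mult_left_le)
    finally show "(\<Sum>j\<in>S2. A i j * z j)\<^sup>2 \<le> (L2_set (A i) S2)\<^sup>2"
      by (metis abs_le_square_iff abs_of_nonneg L2_set_nonneg)
  qed
  then show "sqrt (\<Sum>i\<in>S1. (\<Sum>j\<in>S2. A i j * z j)\<^sup>2) \<le> sqrt (\<Sum>i\<in>S1. (L2_set (A i) S2)\<^sup>2)"
    by simp
qed

lemma spec_upper:
  assumes "(\<Sum>j\<in>S2. (z j)\<^sup>2) \<le> 1"
  shows "sqrt (\<Sum>i\<in>S1. (\<Sum>j\<in>S2. A i j * z j)\<^sup>2) \<le> sub_spec_norm A S1 S2"
  unfolding sub_spec_norm_def
  by (rule cSUP_upper[OF _ spec_bdd]) (use assms in simp)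

lemma spec_nonneg: "0 \<le> sub_spec_norm A S1 S2"
proof -
  have "sqrt (\<Sum>i\<in>S1. (\<Sum>j\<in>S2. A i j * (0::real))\<^sup>2) \<le> sub_spec_norm A S1 S2"
    by (rule spec_upper) simp
  then show ?thesis by simp
qed

lemma spec_scale:
  assumes f2: "finite S2"
  shows "L2_set (\<lambda>i. \<Sum>j\<in>S2. A i j * y j) S1 \<le> sub_spec_norm A S1 S2 * L2_set y S2"
proof (cases "L2_set y S2 = 0")
  case True
  then have "\<forall>j\<in>S2. y j = 0" using L2_set_eq_0_iff[OF f2] by blast
  then have "L2_set (\<lambda>i. \<Sum>j\<in>S2. A i j * y j) S1 = 0" by (simp add: L2_set_def)
  then show ?thesis using True by simp
next
  case False
  define c where "c = L2_set y S2"
  have c: "c > 0" using False L2_set_nonneg[of y S2] unfolding c_def by linarith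
  define z where "z = (\<lambda>j. y j / c)"
  have "(\<Sum>j\<in>S2. (z j)\<^sup>2) = (\<Sum>j\<in>S2. (y j)\<^sup>2) / c\<^sup>2"
    unfolding z_def by (simp add: power_divide sum_divide_distrib)
  also have "(\<Sum>j\<in>S2. (y j)\<^sup>2) = c\<^sup>2" unfolding c_def L2_set_def
    by (simp add: sum_nonneg)
  finally have z1: "(\<Sum>j\<in>S2. (z j)\<^sup>2) \<le> 1" using c by simp
  have "L2_set (\<lambda>i. \<Sum>j\<in>S2. A i j * z j) S1 = L2_set (\<lambda>i. \<Sum>j\<in>S2. A i j * y j) S1 / c"
  proof -
    have eq: "\<And>i. (\<Sum>j\<in>S2. A i j * z j) = (\<Sum>j\<in>S2. A i j * y j) / c"
      unfolding z_def by (simp add: sum_divide_distrib)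
    show ?thesis using c unfolding L2_set_def
      by (simp add: eq power_divide real_sqrt_divide flip: sum_divide_distrib)
  qed
  moreover have "L2_set (\<lambda>i. \<Sum>j\<in>S2. A i j * z j) S1 \<le> sub_spec_norm A S1 S2"
    using spec_upper[OF z1] unfolding L2_set_def .
  ultimately have "L2_set (\<lambda>i. \<Sum>j\<in>S2. A i j * y j) S1 / c \<le> sub_spec_norm A S1 S2"
    by simp
  then have "L2_set (\<lambda>i. \<Sum>j\<in>S2. A i j * y j) S1 \<le> sub_spec_norm A S1 S2 * c"
    using c by (simp add: divide_le_eq)
  then show ?thesis unfolding c_def .
qed

lemma spec_dual:
  assumes f1: "finite S1" and f2: "finite S2"
  shows "L2_set (\<lambda>j. \<Sum>i\<in>S1. A i j * z i) S2 \<le> sub_spec_norm A S1 S2 * L2_set z S1"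
proof -
  define w where "w = (\<lambda>j. \<Sum>i\<in>S1. A i j * z i)"
  have "(L2_set w S2)\<^sup>2 = (\<Sum>j\<in>S2. w j * w j)"
    unfolding L2_set_def by (simp add: sum_nonneg power2_eq_square)
  also have "\<dots> = (\<Sum>j\<in>S2. \<Sum>i\<in>S1. A i j * z i * w j)"
    unfolding w_def by (simp add: sum_distrib_right)
  also have "\<dots> = (\<Sum>i\<in>S1. \<Sum>j\<in>S2. A i j * z i * w j)" by (rule sum.swap)
  also have "\<dots> = (\<Sum>i\<in>S1. z i * (\<Sum>j\<in>S2. A i j * w j))"
    by (simp add: sum_distrib_left mult_ac)
  also have "\<dots> \<le> \<bar>\<Sum>i\<in>S1. z i * (\<Sum>j\<in>S2. A i j * w j)\<bar>" by simp
  also have "\<dots> \<le> L2_set z S1 * L2_set (\<lambda>i. \<Sum>j\<in>S2. A i j * w j) S1" by (rule abs_sum_le_L2)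
  also have "\<dots> \<le> L2_set z S1 * (sub_spec_norm A S1 S2 * L2_set w S2)"
    by (rule mult_left_mono[OF spec_scale[OF f2]]) simp
  finally have k: "(L2_set w S2)\<^sup>2 \<le> (sub_spec_norm A S1 S2 * L2_set z S1) * L2_set w S2"
    by (simp add: mult_ac)
  show ?thesis
  proof (cases "L2_set w S2 = 0")
    case True then show ?thesis unfolding w_def using spec_nonneg[of A S1 S2] by simp
  next
    case False
    then have "L2_set w S2 > 0" using L2_set_nonneg[of w S2] by linarith
    then show ?thesis using k unfolding w_def[symmetric] by (simp add: power2_eq_square)
  qed
qed

lemma finish:
  assumes top: "is_top_set n r p S"
    and r: "\<And>i. r i = \<alpha> * x i + w i" and a: "\<alpha> \<noteq> 0" and aa: "\<bar>\<alpha>\<bar> = \<rho> * \<bar>b\<bar>"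
    and rho: "\<rho> > 0" and C: "C \<ge> 0" and sig: "\<sigma> \<ge> 0"
    and bnd: "\<And>S'. S' \<subseteq> {..<n} \<Longrightarrow> card S' = p \<Longrightarrow> L2_set w S' \<le> C * \<sigma>"
  shows "sub_norm S x \<ge> sqrt (1 / struct_fun n x (card S)) - 2 * C * (1 + \<rho>) / (\<rho> * \<bar>b\<bar>) * \<sigma>"
proof -
  have S: "S \<subseteq> {..<n}" "card S = p" using top unfolding is_top_set_def by auto
  then have "p \<le> n" by (metis card_lessThan card_mono finite_lessThan)
  then obtain T where T: "T \<subseteq> {..<n}" "card T = p" "top_sq_sum n x p = (\<Sum>i\<in>T. (x i)\<^sup>2)"
    using top_exists by blast
  have "L2_set x S \<ge> L2_set x T - 2 * (C * \<sigma>) / \<bar>\<alpha>\<bar>"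
    by (rule core[OF top T(1,2) r a bnd[OF S] bnd[OF T(1,2)]])
  moreover have "sqrt (1 / struct_fun n x (card S)) = L2_set x T"
    unfolding struct_fun_def L2_set_def using T S by simp
  moreover have "2 * (C * \<sigma>) / \<bar>\<alpha>\<bar> \<le> 2 * C * (1 + \<rho>) / (\<rho> * \<bar>b\<bar>) * \<sigma>"
  proof -
    have pos: "\<rho> * \<bar>b\<bar> > 0" using a aa by auto
    have "C \<le> C * (1 + \<rho>)" using C rho by (simp add: algebra_simps)
    then have "C * \<sigma> \<le> C * (1 + \<rho>) * \<sigma>" using sig by (rule mult_right_mono)
    then have "2 * (C * \<sigma>) / \<bar>\<alpha>\<bar> \<le> 2 * (C * (1 + \<rho>) * \<sigma>) / \<bar>\<alpha>\<bar>"
      by (simp add: divide_right_mono)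
    also have "\<dots> = 2 * C * (1 + \<rho>) / (\<rho> * \<bar>b\<bar>) * \<sigma>" unfolding aa by simp
    finally show ?thesis .
  qed
  ultimately show ?thesis unfolding sub_norm_def L2_set_def by linarith
qed


lemma const_ineq:
  fixes C' c' a L m :: real
  assumes "C' > 0" "c' > 0" "a \<ge> 1" "L \<ge> 0" "m > 0"
  shows "C' * sqrt ((a * L + c' * L) / m) \<le> C' * sqrt (1 + c') * sqrt (a * L / m)"
proof -
  have "c' * L \<le> c' * (a * L)"
  proof -
    have "1 * L \<le> a * L" using assms by (intro mult_right_mono) auto
    then show ?thesis using assms by (intro mult_left_mono) auto
  qed
  then have "a * L + c' * L \<le> (1 + c') * (a * L)" by (simp add: algebra_simps)
  then have "(a * L + c' * L) / m \<le> (1 + c') * (a * L / m)"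
    using assms by (simp add: divide_right_mono)
  then have "sqrt ((a * L + c' * L) / m) \<le> sqrt (1 + c') * sqrt (a * L / m)"
    by (simp add: real_sqrt_mult[symmetric])
  then show ?thesis using assms by (simp add: mult.assoc)
qed

theorem proposition4:
  fixes C' c' :: real
  assumes "C' > 0" and "c' > 0"
  shows "\<exists>C>0. \<forall>(n::nat) (m::nat) (X::nat \<Rightarrow> nat \<Rightarrow> real) (Y::nat \<Rightarrow> nat \<Rightarrow> real)
            (\<rho>::real) (u::nat \<Rightarrow> real) (v::nat \<Rightarrow> real) (ku::nat) (kv::nat).
     m > 0 \<and> spiked_params n \<rho> u v ku kv \<and>
     event_E C' c' n m (sample_cross_cov m X Y) \<rho> u v ku kv \<longrightarrow>
     (\<forall>Sv vhat p Su.
        Sv \<subseteq> {..<n} \<and> card Sv \<le> kv \<and> supported_in Sv vhat \<and> sub_norm Sv vhat = 1 \<and>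
        inner_n n v vhat \<noteq> 0 \<and> p \<le> ku \<and>
        is_top_set n (\<lambda>i. \<Sum>j<n. sample_cross_cov m X Y i j * vhat j) p Su \<longrightarrow>
        sub_norm Su u \<ge> sqrt (1 / struct_fun n u (card Su))
          - 2 * C * (1 + \<rho>) / (\<rho> * \<bar>inner_n n v vhat\<bar>)
            * sqrt ((real (card Su) + real (card Sv)) * ln (real n) / real m)) \<and>
     (\<forall>Su uhat q Sv.
        Su \<subseteq> {..<n} \<and> card Su \<le> ku \<and> supported_in Su uhat \<and> sub_norm Su uhat = 1 \<and>
        inner_n n u uhat \<noteq> 0 \<and> q \<le> kv \<and>
        is_top_set n (\<lambda>j. \<Sum>i<n. sample_cross_cov m X Y i j * uhat i) q Sv \<longrightarrow>
        sub_norm Sv v \<ge> sqrt (1 / struct_fun n v (card Sv))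
          - 2 * C * (1 + \<rho>) / (\<rho> * \<bar>inner_n n u uhat\<bar>)
            * sqrt ((real (card Su) + real (card Sv)) * ln (real n) / real m))"
  proof -
  define C where "C = C' * sqrt (1 + c')"
  have Cpos: "C > 0" unfolding C_def using assms by simp
  show ?thesis
  proof (rule exI[of _ C], intro conjI[OF Cpos] allI impI, rule conjI)
    fix n m :: nat and X Y :: "nat \<Rightarrow> nat \<Rightarrow> real" and \<rho> :: real and u v :: "nat \<Rightarrow> real"
      and ku kv :: nat
    assume H: "m > 0 \<and> spiked_params n \<rho> u v ku kv \<and>
      event_E C' c' n m (sample_cross_cov m X Y) \<rho> u v ku kv"
    define Sxy where "Sxy = sample_cross_cov m X Y"
    define W where "W = (\<lambda>i j. Sxy i j - \<rho> * u i * v j)"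
    have m: "m > 0" using H by simp
    have par: "0 < \<rho>" "\<rho> < 1" "sub_norm {..<n} u = 1"
      using H unfolding spiked_params_def by auto
    have ev: "\<And>S1 S2. S1 \<subseteq> {..<n} \<Longrightarrow> S2 \<subseteq> {..<n} \<Longrightarrow> card S1 \<le> ku \<Longrightarrow> card S2 \<le> kv \<Longrightarrow>
        sub_spec_norm W S1 S2
          \<le> C' * sqrt (((real (card S1) + real (card S2)) * ln (real n) + c' * ln (real n)) / real m)"
      using H unfolding event_E_def W_def Sxy_def by blast
    have n1: "n \<ge> 1"
    proof (rule ccontr)
      assume "\<not> n \<ge> 1" then have "n = 0" by simp
      then show False using par(3) unfolding sub_norm_def by simp
    qed
    have L: "ln (real n) \<ge> 0" using n1 by simp
    have key: "\<And>S1 S2. S1 \<subseteq> {..<n} \<Longrightarrow> S2 \<subseteq> {..<n} \<Longrightarrow> card S1 \<le> ku \<Longrightarrow> card S2 \<le> kv \<Longrightarrow>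
        card S1 + card S2 \<ge> 1 \<Longrightarrow>
        sub_spec_norm W S1 S2 \<le> C * sqrt ((real (card S1) + real (card S2)) * ln (real n) / real m)"
    proof -
      fix S1 S2 assume a: "S1 \<subseteq> {..<n}" "S2 \<subseteq> {..<n}" "card S1 \<le> ku" "card S2 \<le> kv"
        "card S1 + card S2 \<ge> 1"
      have "sub_spec_norm W S1 S2
          \<le> C' * sqrt (((real (card S1) + real (card S2)) * ln (real n) + c' * ln (real n)) / real m)"
        using ev a by blast
      also have "\<dots> \<le> C * sqrt ((real (card S1) + real (card S2)) * ln (real n) / real m)"
        unfolding C_def using a(5) L m assms
        by (intro const_ineq) auto
      finally show "sub_spec_norm W S1 S2 \<le> C * sqrt ((real (card S1) + real (card S2)) * ln (real n) / real m)" .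
    qed
    show "(\<forall>Sv vhat p Su.
        Sv \<subseteq> {..<n} \<and> card Sv \<le> kv \<and> supported_in Sv vhat \<and> sub_norm Sv vhat = 1 \<and>
        inner_n n v vhat \<noteq> 0 \<and> p \<le> ku \<and>
        is_top_set n (\<lambda>i. \<Sum>j<n. sample_cross_cov m X Y i j * vhat j) p Su \<longrightarrow>
        sub_norm Su u \<ge> sqrt (1 / struct_fun n u (card Su))
          - 2 * C * (1 + \<rho>) / (\<rho> * \<bar>inner_n n v vhat\<bar>)
            * sqrt ((real (card Su) + real (card Sv)) * ln (real n) / real m))"
    proof (intro allI impI)
      fix Sv vhat p Su
      assume A: "Sv \<subseteq> {..<n} \<and> card Sv \<le> kv \<and> supported_in Sv vhat \<and> sub_norm Sv vhat = 1 \<and>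
        inner_n n v vhat \<noteq> 0 \<and> p \<le> ku \<and>
        is_top_set n (\<lambda>i. \<Sum>j<n. sample_cross_cov m X Y i j * vhat j) p Su"
      have Sv: "Sv \<subseteq> {..<n}" "card Sv \<le> kv" "supported_in Sv vhat" "sub_norm Sv vhat = 1"
        "inner_n n v vhat \<noteq> 0" "p \<le> ku" using A by auto
      have top: "is_top_set n (\<lambda>i. \<Sum>j<n. Sxy i j * vhat j) p Su" using A Sxy_def by simp
      have cSu: "card Su = p" using top unfolding is_top_set_def by simp
      have fSv: "finite Sv" using Sv(1) finite_subset by blast
      have "Sv \<noteq> {}" using Sv(4) unfolding sub_norm_def by auto
      then have cSv: "card Sv \<ge> 1" using fSv by (simp add: Suc_le_eq card_gt_0_iff)
      define w where "w = (\<lambda>i. \<Sum>j\<in>Sv. W i j * vhat j)"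
      have r: "(\<Sum>j<n. Sxy i j * vhat j) = (\<rho> * inner_n n v vhat) * u i + w i" for i
      proof -
        have "(\<Sum>j<n. Sxy i j * vhat j) = (\<Sum>j<n. W i j * vhat j + \<rho> * u i * (v j * vhat j))"
          unfolding W_def by (rule sum.cong) (auto simp: algebra_simps)
        also have "\<dots> = (\<Sum>j<n. W i j * vhat j) + \<rho> * u i * inner_n n v vhat"
          unfolding inner_n_def by (simp add: sum.distrib sum_distrib_left)
        also have "(\<Sum>j<n. W i j * vhat j) = w i"
          unfolding w_def using Sv(1,3) unfolding supported_in_def
          by (intro sum.mono_neutral_right) auto
        finally show ?thesis by (simp add: algebra_simps)
      qed
      have "sub_norm Su u \<ge> sqrt (1 / struct_fun n u (card Su))
          - 2 * C * (1 + \<rho>) / (\<rho> * \<bar>inner_n n v vhat\<bar>)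
            * sqrt ((real p + real (card Sv)) * ln (real n) / real m)"
      proof (rule finish[OF top r])
        show "\<rho> * inner_n n v vhat \<noteq> 0" using par Sv by simp
        show "\<bar>\<rho> * inner_n n v vhat\<bar> = \<rho> * \<bar>inner_n n v vhat\<bar>" using par by (simp add: abs_mult)
        show "\<rho> > 0" "C \<ge> 0" using par Cpos by auto
        show "sqrt ((real p + real (card Sv)) * ln (real n) / real m) \<ge> 0" using L m by simp
        fix S' assume S': "S' \<subseteq> {..<n}" "card S' = p"
        have "L2_set w S' \<le> sub_spec_norm W S' Sv * L2_set vhat Sv"
          unfolding w_def by (rule spec_scale[OF fSv])
        also have "L2_set vhat Sv = 1" using Sv(4) unfolding sub_norm_def L2_set_def .
        also have "sub_spec_norm W S' Sv * 1 \<le> C * sqrt ((real p + real (card Sv)) * ln (real n) / real m)"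
          using key[OF S'(1) Sv(1)] S' Sv cSv by simp
        finally show "L2_set w S' \<le> C * sqrt ((real p + real (card Sv)) * ln (real n) / real m)" .
      qed
      then show "sub_norm Su u \<ge> sqrt (1 / struct_fun n u (card Su))
          - 2 * C * (1 + \<rho>) / (\<rho> * \<bar>inner_n n v vhat\<bar>)
            * sqrt ((real (card Su) + real (card Sv)) * ln (real n) / real m)" using cSu by simp
    qed
    show "(\<forall>Su uhat q Sv.
        Su \<subseteq> {..<n} \<and> card Su \<le> ku \<and> supported_in Su uhat \<and> sub_norm Su uhat = 1 \<and>
        inner_n n u uhat \<noteq> 0 \<and> q \<le> kv \<and>
        is_top_set n (\<lambda>j. \<Sum>i<n. sample_cross_cov m X Y i j * uhat i) q Sv \<longrightarrow>
        sub_norm Sv v \<ge> sqrt (1 / struct_fun n v (card Sv))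
          - 2 * C * (1 + \<rho>) / (\<rho> * \<bar>inner_n n u uhat\<bar>)
            * sqrt ((real (card Su) + real (card Sv)) * ln (real n) / real m))"
    proof (intro allI impI)
      fix Su uhat q Sv
      assume A: "Su \<subseteq> {..<n} \<and> card Su \<le> ku \<and> supported_in Su uhat \<and> sub_norm Su uhat = 1 \<and>
        inner_n n u uhat \<noteq> 0 \<and> q \<le> kv \<and>
        is_top_set n (\<lambda>j. \<Sum>i<n. sample_cross_cov m X Y i j * uhat i) q Sv"
      have Su: "Su \<subseteq> {..<n}" "card Su \<le> ku" "supported_in Su uhat" "sub_norm Su uhat = 1"
        "inner_n n u uhat \<noteq> 0" "q \<le> kv" using A by auto
      have top: "is_top_set n (\<lambda>j. \<Sum>i<n. Sxy i j * uhat i) q Sv" using A Sxy_def by simp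
      have cSv: "card Sv = q" using top unfolding is_top_set_def by simp
      have fSu: "finite Su" using Su(1) finite_subset by blast
      have "Su \<noteq> {}" using Su(4) unfolding sub_norm_def by auto
      then have cSu: "card Su \<ge> 1" using fSu by (simp add: Suc_le_eq card_gt_0_iff)
      define w where "w = (\<lambda>j. \<Sum>i\<in>Su. W i j * uhat i)"
      have r: "(\<Sum>i<n. Sxy i j * uhat i) = (\<rho> * inner_n n u uhat) * v j + w j" for j
      proof -
        have "(\<Sum>i<n. Sxy i j * uhat i) = (\<Sum>i<n. W i j * uhat i + \<rho> * v j * (u i * uhat i))"
          unfolding W_def by (rule sum.cong) (auto simp: algebra_simps)
        also have "\<dots> = (\<Sum>i<n. W i j * uhat i) + \<rho> * v j * inner_n n u uhat"
          unfolding inner_n_def by (simp add: sum.distrib sum_distrib_left)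
        also have "(\<Sum>i<n. W i j * uhat i) = w j"
          unfolding w_def using Su(1,3) unfolding supported_in_def
          by (intro sum.mono_neutral_right) auto
        finally show ?thesis by (simp add: algebra_simps)
      qed
      have "sub_norm Sv v \<ge> sqrt (1 / struct_fun n v (card Sv))
          - 2 * C * (1 + \<rho>) / (\<rho> * \<bar>inner_n n u uhat\<bar>)
            * sqrt ((real (card Su) + real q) * ln (real n) / real m)"
      proof (rule finish[OF top r])
        show "\<rho> * inner_n n u uhat \<noteq> 0" using par Su by simp
        show "\<bar>\<rho> * inner_n n u uhat\<bar> = \<rho> * \<bar>inner_n n u uhat\<bar>" using par by (simp add: abs_mult)
        show "\<rho> > 0" "C \<ge> 0" using par Cpos by auto
        show "sqrt ((real (card Su) + real q) * ln (real n) / real m) \<ge> 0" using L m by simp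
        fix S' assume S': "S' \<subseteq> {..<n}" "card S' = q"
        have fS': "finite S'" using S'(1) finite_subset by blast
        have "L2_set w S' \<le> sub_spec_norm W Su S' * L2_set uhat Su"
          unfolding w_def by (rule spec_dual[OF fSu fS'])
        also have "L2_set uhat Su = 1" using Su(4) unfolding sub_norm_def L2_set_def .
        also have "sub_spec_norm W Su S' * 1 \<le> C * sqrt ((real (card Su) + real q) * ln (real n) / real m)"
          using key[OF Su(1) S'(1)] S' Su cSu by simp
        finally show "L2_set w S' \<le> C * sqrt ((real (card Su) + real q) * ln (real n) / real m)" .
      qed
      then show "sub_norm Sv v \<ge> sqrt (1 / struct_fun n v (card Sv))
          - 2 * C * (1 + \<rho>) / (\<rho> * \<bar>inner_n n u uhat\<bar>)
            * sqrt ((real (card Su) + real (card Sv)) * ln (real n) / real m)" using cSv by simp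
    qed
  qed
qed

end
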